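(* Let $\alpha,\beta\in\mathbb N^N$ with $\alpha_j\le\beta_j$ for all $j$, and let $S:\beta/\alpha\to\mathbb N$ be a row strict tableau. Let $I\subseteq[N]$ be the set of rows of $S$ containing a $0$, and let $T$ be the row strict tableau of shape $\beta/(\alpha+\varepsilon_I)$ with entries in $\mathbb Z_+$ obtained by deleting all zeros from $S$. Then \[ h_{w_0}(T)=h_{w_0}(S)-h_I(\alpha). \]
   Context: Row shapes: for $\alpha,\beta\in\mathbb Z^N$ with $\alpha_j\le\beta_j$, row $j$ of $\beta/\alpha$ consists of boxes with $x$-coordinates $\alpha_j+1,\dots,\beta_j$; boxes at $x$-coordinates $\alpha_j$ and $\beta_j+1$ are said to be adjacent to the left and right ends of row $j$. A $w_0$-triple is $(u,v,w)$ with $v$ a box in row $r$, $u,w$ each a box of or adjacent to a row $j>r$, with $x$-coordinates $i_u=i_v$, $i_w=i_v+1$. A row strict tableau $S:\beta/\alpha\to\mathcal A$ ($\mathcal A$ totally ordered) is strictly increasing along rows. A $w_0$-triple is increasing in $S$ if $S(u)<S(v)<S(w)$, with the conventions $S(u)=-\infty$ if $u$ is adjacent to the left end of a row and $S(w)=+\infty$ if $w$ is adjacent to the right end; $h_{w_0}(S)$ is the number of increasing $w_0$-triples. $\varepsilon_I=\sum_{i\in I}\varepsilon_i$, and $h_I(\alpha)=|\{(r,s):1\le r<s\le N,\ r\in I,\ s\notin I,\ \alpha_s=\alpha_r+1\}|$. *)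

theory Defs
  imports Main
begin

text \<open>Rows are indexed by 1..N. A composition is a function nat => nat (only values on 1..N matter).
  A tableau is a function S :: nat => nat => 'a, where S j x is the entry of the box in row j
  with x-coordinate x.\<close>

definition is_box :: "(nat \<Rightarrow> nat) \<Rightarrow> (nat \<Rightarrow> nat) \<Rightarrow> nat \<Rightarrow> nat \<Rightarrow> bool" where
  "is_box \<alpha> \<beta> j x \<longleftrightarrow> \<alpha> j < x \<and> x \<le> \<beta> j"

definition row_strict :: "nat \<Rightarrow> (nat \<Rightarrow> nat) \<Rightarrow> (nat \<Rightarrow> nat) \<Rightarrow> (nat \<Rightarrow> nat \<Rightarrow> 'a::linorder) \<Rightarrow> bool" where
  "row_strict N \<alpha> \<beta> S \<longleftrightarrow>
     (\<forall>j\<in>{1..N}. \<forall>x y. \<alpha> j < x \<longrightarrow> x < y \<longrightarrow> y \<le> \<beta> j \<longrightarrow> S j x < S j y)"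

text \<open>w0-triples: (r, x, j) encodes v = box (r,x), u = (j,x), w = (j,x+1), with r < j,
  v a box of row r, and u, w boxes of or adjacent to row j, i.e. alpha j <= x <= beta j.\<close>

definition w0_triples :: "nat \<Rightarrow> (nat \<Rightarrow> nat) \<Rightarrow> (nat \<Rightarrow> nat) \<Rightarrow> (nat \<times> nat \<times> nat) set" where
  "w0_triples N \<alpha> \<beta> = {(r, x, j). r \<in> {1..N} \<and> j \<in> {1..N} \<and> r < j \<and>
      is_box \<alpha> \<beta> r x \<and> \<alpha> j \<le> x \<and> x \<le> \<beta> j}"

text \<open>Increasing: S(u) < S(v) < S(w), with S(u) = -infinity when u is adjacent to the left end
  (x = alpha j) and S(w) = +infinity when w is adjacent to the right end (x + 1 = beta j + 1).\<close>

definition increasing_triple ::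
  "(nat \<Rightarrow> nat) \<Rightarrow> (nat \<Rightarrow> nat) \<Rightarrow> (nat \<Rightarrow> nat \<Rightarrow> 'a::linorder) \<Rightarrow> nat \<times> nat \<times> nat \<Rightarrow> bool" where
  "increasing_triple \<alpha> \<beta> S t = (case t of (r, x, j) \<Rightarrow>
      (x = \<alpha> j \<or> S j x < S r x) \<and> (x = \<beta> j \<or> S r x < S j (x + 1)))"

definition h_w0 :: "nat \<Rightarrow> (nat \<Rightarrow> nat) \<Rightarrow> (nat \<Rightarrow> nat) \<Rightarrow> (nat \<Rightarrow> nat \<Rightarrow> 'a::linorder) \<Rightarrow> nat" where
  "h_w0 N \<alpha> \<beta> S = card {t \<in> w0_triples N \<alpha> \<beta>. increasing_triple \<alpha> \<beta> S t}"

definition h_I :: "nat \<Rightarrow> nat set \<Rightarrow> (nat \<Rightarrow> nat) \<Rightarrow> nat" where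
  "h_I N I \<alpha> = card {(r, s). 1 \<le> r \<and> r < s \<and> s \<le> N \<and> r \<in> I \<and> s \<notin> I \<and> \<alpha> s = \<alpha> r + 1}"

definition add_eps :: "(nat \<Rightarrow> nat) \<Rightarrow> nat set \<Rightarrow> nat \<Rightarrow> nat" where
  "add_eps \<alpha> I = (\<lambda>j. if j \<in> I then \<alpha> j + 1 else \<alpha> j)"

end

theory Submission
  imports Defs
begin

theorem lemma5p3p3:
  fixes N :: nat and \<alpha> \<beta> :: "nat \<Rightarrow> nat" and S T :: "nat \<Rightarrow> nat \<Rightarrow> nat" and I :: "nat set"
  assumes le: "\<forall>j\<in>{1..N}. \<alpha> j \<le> \<beta> j"
    and S_rs: "row_strict N \<alpha> \<beta> S"
    and I_def: "I = {j \<in> {1..N}. \<exists>x. is_box \<alpha> \<beta> j x \<and> S j x = 0}"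
    and T_rs: "row_strict N (add_eps \<alpha> I) \<beta> T"
    and T_pos: "\<forall>j\<in>{1..N}. \<forall>x. is_box (add_eps \<alpha> I) \<beta> j x \<longrightarrow> T j x > 0"
    and T_S: "\<forall>j\<in>{1..N}. \<forall>x. is_box (add_eps \<alpha> I) \<beta> j x \<longrightarrow> T j x = S j x"
  shows "int (h_w0 N (add_eps \<alpha> I) \<beta> T) = int (h_w0 N \<alpha> \<beta> S) - int (h_I N I \<alpha>)"
proof -
  define a' where "a' = add_eps \<alpha> I"
  have a'I: "j \<in> I \<Longrightarrow> a' j = \<alpha> j + 1" for j by (simp add: a'_def add_eps_def)
  have a'nI: "j \<notin> I \<Longrightarrow> a' j = \<alpha> j" for j by (simp add: a'_def add_eps_def)
  have zfirst: "x = \<alpha> j + 1" if "j \<in> {1..N}" "is_box \<alpha> \<beta> j x" "S j x = 0" for j x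
  proof (rule ccontr)
    assume "x \<noteq> \<alpha> j + 1"
    with that have "\<alpha> j < \<alpha> j + 1" "\<alpha> j + 1 < x" "x \<le> \<beta> j" unfolding is_box_def by auto
    then have "S j (\<alpha> j + 1) < S j x" using S_rs that(1) unfolding row_strict_def by blast
    with that show False by simp
  qed
  have Iz: "S j (\<alpha> j + 1) = 0 \<and> \<alpha> j < \<beta> j \<and> j \<in> {1..N}" if "j \<in> I" for j
  proof -
    from that obtain x where "j \<in> {1..N}" "is_box \<alpha> \<beta> j x" "S j x = 0" unfolding I_def by auto
    with zfirst[OF this] show ?thesis unfolding is_box_def by auto
  qed
  have nIpos: "S j x > 0" if "j \<in> {1..N}" "j \<notin> I" "is_box \<alpha> \<beta> j x" for j x
    using that unfolding I_def by auto
  have Tpos: "S j x > 0" if "j \<in> {1..N}" "is_box a' \<beta> j x" for j x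
    using that T_pos T_S unfolding a'_def by fastforce
  have TS: "T j x = S j x" if "j \<in> {1..N}" "is_box a' \<beta> j x" for j x
    using that T_S unfolding a'_def by fastforce
  have a'ge: "\<alpha> j \<le> a' j" "a' j \<le> \<alpha> j + 1" for j by (cases "j \<in> I"; simp add: a'I a'nI)+
  define A where "A = {t \<in> w0_triples N \<alpha> \<beta>. increasing_triple \<alpha> \<beta> S t}"
  define B where "B = {t \<in> w0_triples N a' \<beta>. increasing_triple a' \<beta> T t}"
  define C where "C = {(r, s). 1 \<le> r \<and> r < s \<and> s \<le> N \<and> r \<in> I \<and> s \<notin> I \<and> \<alpha> s = \<alpha> r + 1}"
  define g where "g = (\<lambda>(r::nat, s::nat). (r, \<alpha> r + 1, s))"
  have memA: "(r,x,j) \<in> A \<longleftrightarrow> (r,x,j) \<in> B \<or> (r,x,j) \<in> g ` C" for r x j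
  proof
    assume H: "(r,x,j) \<in> A"
    hence W: "r \<in> {1..N}" "j \<in> {1..N}" "r < j" "\<alpha> r < x" "x \<le> \<beta> r" "\<alpha> j \<le> x" "x \<le> \<beta> j"
      and inc1: "x = \<alpha> j \<or> S j x < S r x" and inc2: "x = \<beta> j \<or> S r x < S j (x + 1)"
      unfolding A_def w0_triples_def increasing_triple_def is_box_def by auto
    show "(r,x,j) \<in> B \<or> (r,x,j) \<in> g ` C"
    proof (cases "r \<in> I \<and> x = \<alpha> r + 1")
      case True
      then have S0: "S r x = 0" using Iz by auto
      then have xj: "x = \<alpha> j" using inc1 by auto
      have jnI: "j \<notin> I"
      proof
        assume "j \<in> I"
        then have "S j (x+1) = 0" "x \<noteq> \<beta> j" using Iz[OF \<open>j \<in> I\<close>] xj by auto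
        with inc2 S0 show False by auto
      qed
      have "(r, j) \<in> C" using True W xj jnI unfolding C_def by auto
      then have "(r,x,j) \<in> g ` C" unfolding g_def using True by force
      then show ?thesis by blast
    next
      case False
      then have vb: "a' r < x" using W a'I a'nI by (cases "r \<in> I") auto
      have jx: "a' j \<le> x"
      proof (cases "j \<in> I")
        case True
        have "x \<noteq> \<alpha> j"
        proof
          assume xj: "x = \<alpha> j"
          then have "S j (x+1) = 0" "x \<noteq> \<beta> j" using Iz[OF True] by auto
          with inc2 show False by auto
        qed
        then show ?thesis using W a'I[OF True] by auto
      qed (use W a'nI in auto)
      have Tr: "T r x = S r x" using TS W vb unfolding is_box_def by auto
      have Svpos: "S r x > 0" using Tpos W vb unfolding is_box_def by auto
      have i1: "x = a' j \<or> T j x < T r x"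
      proof (cases "x = a' j")
        case False
        then have "a' j < x" using jx by auto
        then have "T j x = S j x" "x \<noteq> \<alpha> j" using TS W a'ge[of j] unfolding is_box_def by auto
        then show ?thesis using inc1 Tr by auto
      qed simp
      have i2: "x = \<beta> j \<or> T r x < T j (x + 1)"
      proof (cases "x = \<beta> j")
        case False
        then have "T j (x+1) = S j (x+1)" using TS W jx unfolding is_box_def by auto
        then show ?thesis using inc2 Tr by auto
      qed simp
      have "(r,x,j) \<in> B" unfolding B_def w0_triples_def increasing_triple_def is_box_def
        using W vb jx i1 i2 by auto
      then show ?thesis by blast
    qed
  next
    assume "(r,x,j) \<in> B \<or> (r,x,j) \<in> g ` C"
    then show "(r,x,j) \<in> A"
    proof
      assume HB: "(r,x,j) \<in> B"
      hence W: "r \<in> {1..N}" "j \<in> {1..N}" "r < j" "a' r < x" "x \<le> \<beta> r" "a' j \<le> x" "x \<le> \<beta> j"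
        and inc1: "x = a' j \<or> T j x < T r x" and inc2: "x = \<beta> j \<or> T r x < T j (x + 1)"
        unfolding B_def w0_triples_def increasing_triple_def is_box_def by auto
      have Tr: "T r x = S r x" using TS W unfolding is_box_def by auto
      have Svpos: "S r x > 0" using Tpos W unfolding is_box_def by auto
      have i1: "x = \<alpha> j \<or> S j x < S r x"
      proof (cases "x = a' j")
        case True
        show ?thesis
        proof (cases "j \<in> I")
          case True
          then have "x = \<alpha> j + 1" "S j (\<alpha> j + 1) = 0" using Iz a'I \<open>x = a' j\<close> by auto
          then show ?thesis using Svpos by auto
        qed (use True a'nI in auto)
      next
        case False
        then have "a' j < x" using W by auto
        then have "T j x = S j x" using TS W unfolding is_box_def by auto
        then show ?thesis using inc1 Tr False by auto
      qed
      have i2: "x = \<beta> j \<or> S r x < S j (x + 1)"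
      proof (cases "x = \<beta> j")
        case False
        then have "T j (x+1) = S j (x+1)" using TS W unfolding is_box_def by auto
        then show ?thesis using inc2 Tr by auto
      qed simp
      show ?thesis unfolding A_def w0_triples_def increasing_triple_def is_box_def
        using W i1 i2 a'ge[of r] a'ge[of j] by auto
    next
      assume "(r,x,j) \<in> g ` C"
      then have C: "1 \<le> r" "r < j" "j \<le> N" "r \<in> I" "j \<notin> I" "\<alpha> j = \<alpha> r + 1" "x = \<alpha> r + 1"
        unfolding g_def C_def by auto
      have jN: "j \<in> {1..N}" using C by auto
      have S0: "S r x = 0" "\<alpha> r < \<beta> r" using Iz C by auto
      have i2: "x = \<beta> j \<or> S r x < S j (x + 1)"
      proof (cases "x = \<beta> j")
        case False
        have "\<alpha> j \<le> \<beta> j" using le jN by blast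
        then have "x < \<beta> j" using False C by auto
        then have "S j (x+1) > 0" using nIpos[OF jN C(5)] C unfolding is_box_def by auto
        then show ?thesis using S0 by auto
      qed simp
      have ajb: "\<alpha> j \<le> \<beta> j" using le jN by blast
      show ?thesis unfolding A_def w0_triples_def increasing_triple_def is_box_def
        using C S0 i2 ajb jN by auto
    qed
  qed
  have AE: "A = B \<union> g ` C"
  proof (rule set_eqI)
    fix t show "t \<in> A \<longleftrightarrow> t \<in> B \<union> g ` C"
      using memA[of "fst t" "fst (snd t)" "snd (snd t)"] by simp
  qed
  have disj: "B \<inter> g ` C = {}"
  proof -
    { fix r x j assume "(r,x,j) \<in> B" "(r,x,j) \<in> g ` C"
      then have "a' r < x" "r \<in> I" "x = \<alpha> r + 1"
        unfolding B_def w0_triples_def is_box_def g_def C_def by auto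
      then have False using a'I by auto }
    then show ?thesis by auto
  qed
  have finW: "finite (w0_triples N a' \<beta>)"
  proof (rule finite_subset)
    show "w0_triples N a' \<beta> \<subseteq> {1..N} \<times> {0..Max (\<beta> ` {1..N})} \<times> {1..N}"
    proof
      fix t assume "t \<in> w0_triples N a' \<beta>"
      then obtain r x j where t: "t = (r,x,j)" "r \<in> {1..N}" "j \<in> {1..N}" "x \<le> \<beta> r"
        unfolding w0_triples_def is_box_def by auto
      have "\<beta> r \<le> Max (\<beta> ` {1..N})" using t(2) by (intro Max_ge) auto
      then have "x \<le> Max (\<beta> ` {1..N})" using t(4) by linarith
      then show "t \<in> {1..N} \<times> {0..Max (\<beta> ` {1..N})} \<times> {1..N}" using t(1,2,3) by simp
    qed
  qed auto
  have finB: "finite B" unfolding B_def using finW by auto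
  have finC: "finite C"
    by (rule finite_subset[of _ "{0..N} \<times> {0..N}"]) (auto simp: C_def)
  have injg: "inj_on g C" unfolding g_def inj_on_def by auto
  have "card A = card B + card C"
    unfolding AE using card_Un_disjoint[OF finB finite_imageI[OF finC] disj] card_image[OF injg] by simp
  then show ?thesis unfolding h_w0_def h_I_def A_def B_def C_def a'_def by simp
qed

end
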